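(* Let $\mathsf X$ be a subcategory of the cluster tube $\mathsf C_n$ with corresponding $n$-periodic collection of arcs $\mathcal X$, and suppose $\mathsf X={}^{\perp}(\mathsf X^{\perp})$ (equivalently, $\mathcal X$ is an $n$-periodic Ptolemy diagram). Then exactly one of the following holds: (i) $\mathsf X$ has only finitely many indecomposable objects (up to isomorphism), all of level $\le n-1$, and $\mathsf X^{\perp}$ has infinitely many indecomposable objects; (ii) $\mathsf X$ has infinitely many indecomposable objects, and $\mathsf X^{\perp}$ has only finitely many indecomposable objects, all of level $\le n-1$.
   Context: Fix a field $K$ and an integer $n\ge 1$. The cluster tube $\mathsf C_n=D^b(\mathsf T_n)/(\tau^{-1}\circ\Sigma)$ is the cluster category of the tube category $\mathsf T_n$ of nilpotent finite-dimensional representations of the cyclically oriented cyclic quiver with $n$ vertices; it is a Krull–Schmidt, Hom-finite, 2-Calabi–Yau triangulated category with $\Sigma=\tau$. An arc of the $\infty$-gon is a pair $(i,j)$ of integers with $j-i\ge 2$; its length is $j-i$. Isoclasses of indecomposable objects of $\mathsf C_n$ correspond bijectively to classes $[(i,j)]=\{(i+rn,j+rn):r\in\mathbb Z\}$ of arcs, with $\Sigma[(i,j)]=\tau[(i,j)]=[(i-1,j-1)]$; the level of $[(i,j)]$ is $j-i-1$. Subcategories are full and closed under isomorphisms, finite direct sums and direct summands, and correspond to $n$-periodic collections of arcs (the arcs representing their indecomposables). $\mathsf X^{\perp}=\{c:\operatorname{Hom}(x,c)=0\ \forall x\in\mathsf X\}$, ${}^{\perp}\mathsf Y=\{c:\operatorname{Hom}(c,y)=0\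 \forall y\in\mathsf Y\}$. Two arcs $(i,j),(k,l)$ cross if $i<k<j<l$ or $k<i<l<j$. A Ptolemy diagram of the $\infty$-gon is a collection $\mathcal X$ of arcs such that whenever $(i,j),(r,s)\in\mathcal X$ cross with $i<r$, each of $(i,r),(i,s),(r,j),(j,s)$ which is an arc lies in $\mathcal X$. *)

theory Defs
  imports Main
begin

(* Combinatorial model of the cluster tube C_n.
   Arcs of the infinity-gon: pairs (i,j) of integers with j - i >= 2. *)
type_synonym arc = "int \<times> int"

definition is_arc :: "arc \<Rightarrow> bool" where
  "is_arc a \<longleftrightarrow> snd a - fst a \<ge> 2"

(* The class [(i,j)] of an arc: an isoclass of indecomposables of C_n. *)
definition arc_class :: "nat \<Rightarrow> arc \<Rightarrow> arc set" where
  "arc_class n a = {(fst a + r * int n, snd a + r * int n) | r. True}"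

definition level :: "arc \<Rightarrow> int" where
  "level a = snd a - fst a - 1"

(* subcategories of C_n = n-periodic collections of arcs *)
definition periodic_arcs :: "nat \<Rightarrow> arc set \<Rightarrow> bool" where
  "periodic_arcs n X \<longleftrightarrow> (\<forall>a\<in>X. is_arc a) \<and>
     (\<forall>a\<in>X. \<forall>r::int. (fst a + r * int n, snd a + r * int n) \<in> X)"

definition crosses :: "arc \<Rightarrow> arc \<Rightarrow> bool" where
  "crosses a b \<longleftrightarrow> (fst a < fst b \<and> fst b < snd a \<and> snd a < snd b)
                   \<or> (fst b < fst a \<and> fst a < snd b \<and> snd b < snd a)"

(* Ext^1([a],[b]) <> 0 iff some representative of [a] crosses some representative of [b]. *)
definition ext_nz :: "nat \<Rightarrow> arc \<Rightarrow> arc \<Rightarrow> bool" where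
  "ext_nz n a b \<longleftrightarrow> (\<exists>a'\<in>arc_class n a. \<exists>b'\<in>arc_class n b. crosses a' b')"

definition desusp :: "arc \<Rightarrow> arc" where
  "desusp a = (fst a + 1, snd a + 1)"

(* Hom(a,c) = Ext^1(a, Sigma^{-1} c) *)
definition hom_nz :: "nat \<Rightarrow> arc \<Rightarrow> arc \<Rightarrow> bool" where
  "hom_nz n a c \<longleftrightarrow> ext_nz n a (desusp c)"

definition right_perp :: "nat \<Rightarrow> arc set \<Rightarrow> arc set" where
  "right_perp n X = {c. is_arc c \<and> (\<forall>x\<in>X. \<not> hom_nz n x c)}"

definition left_perp :: "nat \<Rightarrow> arc set \<Rightarrow> arc set" where
  "left_perp n Y = {c. is_arc c \<and> (\<forall>y\<in>Y. \<not> hom_nz n c y)}"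

definition indecs :: "nat \<Rightarrow> arc set \<Rightarrow> arc set set" where
  "indecs n X = arc_class n ` X"

end

theory Submission
  imports Defs
begin

lemma class_mem: "b \<in> arc_class n a \<longleftrightarrow> (\<exists>r. b = (fst a + r * int n, snd a + r * int n))"
  unfolding arc_class_def by auto

lemma class_self: "a \<in> arc_class n a"
  unfolding class_mem by (rule exI[of _ 0]) simp

lemma class_shift_mem:
  assumes "b \<in> arc_class n a"
  shows "(fst b + s * int n, snd b + s * int n) \<in> arc_class n a"
proof -
  from assms obtain r where "b = (fst a + r * int n, snd a + r * int n)" unfolding class_mem by blast
  then show ?thesis unfolding class_mem
    by (intro exI[of _ "r + s"]) (simp add: algebra_simps)
qed

lemma class_shift: "arc_class n (fst a + r * int n, snd a + r * int n) = arc_class n a"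
proof
  show "arc_class n (fst a + r * int n, snd a + r * int n) \<subseteq> arc_class n a"
  proof
    fix b assume "b \<in> arc_class n (fst a + r * int n, snd a + r * int n)"
    then obtain s where "b = (fst a + r * int n + s * int n, snd a + r * int n + s * int n)"
      unfolding class_mem by auto
    then show "b \<in> arc_class n a" unfolding class_mem
      by (intro exI[of _ "r + s"]) (simp add: algebra_simps)
  qed
next
  show "arc_class n a \<subseteq> arc_class n (fst a + r * int n, snd a + r * int n)"
  proof
    fix b assume "b \<in> arc_class n a"
    then obtain s where "b = (fst a + s * int n, snd a + s * int n)"
      unfolding class_mem by auto
    then show "b \<in> arc_class n (fst a + r * int n, snd a + r * int n)" unfolding class_mem
      by (intro exI[of _ "s - r"]) (simp add: algebra_simps)
  qed
qed

lemma len_class: "b \<in> arc_class n a \<Longrightarrow> snd b - fst b = snd a - fst a"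
  unfolding class_mem by auto

lemma periodic_mem:
  assumes "periodic_arcs n X" "a \<in> X" "b \<in> arc_class n a"
  shows "b \<in> X"
  using assms unfolding periodic_arcs_def class_mem by auto

lemma finite_indecs:
  assumes n: "n \<ge> 1" and S: "\<forall>a\<in>S. is_arc a \<and> snd a - fst a \<le> int n"
  shows "finite (indecs n S)"
proof -
  have "indecs n S \<subseteq> arc_class n ` ({0..<int n} \<times> {0..2 * int n})"
  proof
    fix C assume "C \<in> indecs n S"
    then obtain a where a: "a \<in> S" "C = arc_class n a" unfolding indecs_def by auto
    define r where "r = - (fst a div int n)"
    have e1: "fst a + r * int n = fst a mod int n"
      unfolding r_def by (simp add: minus_div_mult_eq_mod[symmetric] algebra_simps)
    have m: "0 \<le> fst a mod int n" "fst a mod int n < int n" using n by auto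
    have e2: "snd a + r * int n = fst a mod int n + (snd a - fst a)" using e1 by linarith
    have "C = arc_class n (fst a + r * int n, snd a + r * int n)"
      using a class_shift by metis
    moreover have "(fst a + r * int n, snd a + r * int n) \<in> {0..<int n} \<times> {0..2 * int n}"
    proof -
      have "2 \<le> snd a - fst a" "snd a - fst a \<le> int n" using S a(1) unfolding is_arc_def by auto
      then have "0 \<le> fst a + r * int n" "fst a + r * int n < int n"
         "0 \<le> snd a + r * int n" "snd a + r * int n \<le> 2 * int n" using e1 e2 m by linarith+
      then show ?thesis by simp
    qed
    ultimately show "C \<in> arc_class n ` ({0..<int n} \<times> {0..2 * int n})" by blast
  qed
  then show ?thesis by (rule finite_subset) simp
qed

lemma infinite_indecs:
  assumes "\<forall>k::int. \<exists>a\<in>S. snd a - fst a \<ge> k"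
  shows "infinite (indecs n S)"
proof
  assume fin: "finite (indecs n S)"
  have sub: "(\<lambda>a. snd a - fst a) ` S \<subseteq> (\<Union>C\<in>indecs n S. (\<lambda>a. snd a - fst a) ` C)"
    unfolding indecs_def using class_self by fastforce
  have "\<forall>C\<in>indecs n S. finite ((\<lambda>a. snd a - fst a) ` C)"
  proof
    fix C assume "C \<in> indecs n S"
    then obtain a where "C = arc_class n a" unfolding indecs_def by auto
    then have "(\<lambda>a. snd a - fst a) ` C \<subseteq> {snd a - fst a}" using len_class by fastforce
    then show "finite ((\<lambda>a. snd a - fst a) ` C)" using finite_subset by blast
  qed
  with fin have "finite (\<Union>C\<in>indecs n S. (\<lambda>a. snd a - fst a) ` C)" by blast
  with sub have f: "finite ((\<lambda>a. snd a - fst a) ` S)" using finite_subset by blast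
  obtain a where "a \<in> S" "snd a - fst a \<ge> Max (insert 0 ((\<lambda>a. snd a - fst a) ` S)) + 1"
    using assms by blast
  moreover have "snd a - fst a \<le> Max (insert 0 ((\<lambda>a. snd a - fst a) ` S))"
    using f calculation(1) by (intro Max_ge) auto
  ultimately show False by linarith
qed

lemma cross_in_a: "crosses a b \<Longrightarrow> (fst a < fst b \<and> fst b < snd a) \<or> (fst a < snd b \<and> snd b < snd a)"
  unfolding crosses_def by auto

lemma cross_in_b: "crosses a b \<Longrightarrow> (fst b < fst a \<and> fst a < snd b) \<or> (fst b < snd a \<and> snd a < snd b)"
  unfolding crosses_def by auto

lemma cross_split:
  assumes "q - p > m" "crosses (p, q + m) b"
  shows "crosses (p, q) b \<or> crosses (p + m, q + m) b"
  using assms unfolding crosses_def by auto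


lemma caseA:
  fixes n :: nat and X :: "arc set"
  assumes n: "n \<ge> 1" and per: "periodic_arcs n X"
    and cl: "X = left_perp n (right_perp n X)"
    and a0: "a0 \<in> X" "snd a0 - fst a0 > int n"
  shows "infinite (indecs n X) \<and> finite (indecs n (right_perp n X))
                   \<and> (\<forall>a\<in>right_perp n X. level a \<le> int n - 1)"
proof -
  define Y where "Y = right_perp n X"
  have XY: "X = left_perp n Y" using cl Y_def by simp
  have A1: "(fst a, snd a + int n) \<in> X" if a: "a \<in> X" "snd a - fst a > int n" for a
  proof -
    have "(fst a, snd a + int n) \<in> left_perp n Y"
      unfolding left_perp_def
    proof (intro CollectI conjI ballI)
      show "is_arc (fst a, snd a + int n)" using a n unfolding is_arc_def by simp
    next
      fix y assume y: "y \<in> Y"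
      show "\<not> hom_nz n (fst a, snd a + int n) y"
      proof
        assume "hom_nz n (fst a, snd a + int n) y"
        then obtain a' b' where a': "a' \<in> arc_class n (fst a, snd a + int n)"
          and b': "b' \<in> arc_class n (desusp y)" and cr: "crosses a' b'"
          unfolding hom_nz_def ext_nz_def by blast
        from a' obtain r where ar: "a' = (fst a + r * int n, snd a + int n + r * int n)"
          unfolding class_mem by auto
        have "crosses (fst a + r * int n, snd a + r * int n + int n) b'"
          using cr ar by (simp add: algebra_simps)
        then have "crosses (fst a + r * int n, snd a + r * int n) b' \<or>
                   crosses (fst a + r * int n + int n, snd a + r * int n + int n) b'"
          using a(2) by (intro cross_split) auto
        moreover have "(fst a + r * int n, snd a + r * int n) \<in> arc_class n a"
          unfolding class_mem by blast
        moreover have "(fst a + r * int n + int n, snd a + r * int n + int n) \<in> arc_class n a"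
          unfolding class_mem by (intro exI[of _ "r+1"]) (simp add: algebra_simps)
        ultimately have "hom_nz n a y" unfolding hom_nz_def ext_nz_def using b' by blast
        then show False using y a(1) unfolding Y_def right_perp_def by blast
      qed
    qed
    then show ?thesis using XY by simp
  qed
  have A2: "(fst a0, snd a0 + int k * int n) \<in> X" for k
  proof (induction k)
    case 0 then show ?case using a0 by simp
  next
    case (Suc k)
    have "snd (fst a0, snd a0 + int k * int n) - fst (fst a0, snd a0 + int k * int n) > int n"
    proof -
      have "int k * int n \<ge> 0" by simp
      then show ?thesis using a0(2) unfolding fst_conv snd_conv by linarith
    qed
    from A1[OF Suc this] show ?case by (simp add: algebra_simps)
  qed
  have inf: "infinite (indecs n X)"
  proof (rule infinite_indecs, intro allI)
    fix k :: int
    have "int (nat k) * int n \<ge> int (nat k) * 1" using n by (intro mult_left_mono) auto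
    then have "snd (fst a0, snd a0 + int (nat k) * int n) - fst (fst a0, snd a0 + int (nat k) * int n) \<ge> k"
      using a0(2) unfolding fst_conv snd_conv by linarith
    then show "\<exists>a\<in>X. k \<le> snd a - fst a" using A2 by blast
  qed
  have A4: "snd c - fst c \<le> int n" if c: "c \<in> Y" for c
  proof (rule ccontr)
    assume "\<not> ?thesis"
    then have cl': "snd c - fst c > int n" by simp
    define i where "i = fst c"
    define j where "j = snd c"
    define K where "K = nat (j - i)"
    define p where "p = fst a0"
    define q where "q = snd a0 + int K * int n"
    have xK: "(p, q) \<in> X" using A2 unfolding p_def q_def by blast
    define d where "d = (i + 1 - p) div int n"
    define m where "m = (i + 1 - p) mod int n"
    have dm: "i + 1 - p = d * int n + m" unfolding d_def m_def by simp
    have m: "0 \<le> m" "m < int n" unfolding m_def using n by auto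
    define r where "r = d + 1"
    have pr: "p + r * int n = i + 1 - m + int n" unfolding r_def using dm by (simp add: algebra_simps)
    have Kn: "int K * int n \<ge> j - i" unfolding K_def using n cl' i_def j_def
      by (simp add: mult_le_cancel_left1)
    have qp: "q - p > int K * int n" unfolding q_def p_def using a0(2) by simp
    have "crosses (p + r * int n, q + r * int n) (i + 1, j + 1)"
      unfolding crosses_def using pr m Kn qp cl' i_def j_def by simp
    moreover have "(p + r * int n, q + r * int n) \<in> arc_class n (p, q)"
      unfolding class_mem by auto
    moreover have "(i + 1, j + 1) \<in> arc_class n (desusp c)"
      using class_self[of "desusp c" n] unfolding desusp_def i_def j_def .
    ultimately have "hom_nz n (p, q) c" unfolding hom_nz_def ext_nz_def by blast
    then show False using xK c unfolding Y_def right_perp_def by blast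
  qed
  have "finite (indecs n Y)"
    using A4 n by (intro finite_indecs) (auto simp: Y_def right_perp_def)
  moreover have "\<forall>a\<in>Y. level a \<le> int n - 1" using A4 unfolding level_def by fastforce
  ultimately show ?thesis using inf Y_def by simp
qed

lemma caseB:
  fixes n :: nat and X :: "arc set"
  assumes n: "n \<ge> 1" and per: "periodic_arcs n X"
    and cl: "X = left_perp n (right_perp n X)"
    and short: "\<forall>a\<in>X. snd a - fst a \<le> int n"
  shows "infinite (indecs n (right_perp n X))"
proof -
  define Y where "Y = right_perp n X"
  have XY: "X = left_perp n Y" using cl Y_def by simp
  have shiftX: "(fst x + s * int n, snd x + s * int n) \<in> X" if "x \<in> X" for x s
    using that per unfolding periodic_arcs_def by blast
  show ?thesis
  proof (cases "\<exists>e. \<forall>x\<in>X. \<not> (fst x < e \<and> e < snd x)")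
    case True
    then obtain e where e: "\<forall>x\<in>X. \<not> (fst x < e \<and> e < snd x)" by blast
    have mem: "(e - 1, e - 1 + int k * int n) \<in> Y" if k: "k \<ge> 2" for k
      unfolding Y_def right_perp_def
    proof (intro CollectI conjI ballI)
      have "int k * int n \<ge> 2 * 1" using k n by (intro mult_mono) auto
      then show "is_arc (e - 1, e - 1 + int k * int n)" unfolding is_arc_def by simp
    next
      fix x assume x: "x \<in> X"
      show "\<not> hom_nz n x (e - 1, e - 1 + int k * int n)"
      proof
        assume "hom_nz n x (e - 1, e - 1 + int k * int n)"
        then obtain a' b' where a': "a' \<in> arc_class n x"
          and b': "b' \<in> arc_class n (e, e + int k * int n)" and cr: "crosses a' b'"
          unfolding hom_nz_def ext_nz_def desusp_def by auto
        from a' obtain s where as: "a' = (fst x + s * int n, snd x + s * int n)"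
          unfolding class_mem by auto
        from b' obtain r where br: "b' = (e + r * int n, e + int k * int n + r * int n)"
          unfolding class_mem by auto
        from cross_in_a[OF cr] show False
        proof
          assume h: "fst a' < fst b' \<and> fst b' < snd a'"
          have "(fst x + (s - r) * int n, snd x + (s - r) * int n) \<in> X" using shiftX x by blast
          moreover have "fst x + (s - r) * int n < e \<and> e < snd x + (s - r) * int n"
            using h as br by (simp add: algebra_simps)
          ultimately show False using e by fastforce
        next
          assume h: "fst a' < snd b' \<and> snd b' < snd a'"
          have "(fst x + (s - r - int k) * int n, snd x + (s - r - int k) * int n) \<in> X"
            using shiftX x by blast
          moreover have "fst x + (s - r - int k) * int n < e \<and> e < snd x + (s - r - int k) * int n"
            using h as br by (simp add: algebra_simps)
          ultimately show False using e by fastforce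
        qed
      qed
    qed
    show ?thesis unfolding Y_def[symmetric]
    proof (rule infinite_indecs, intro allI)
      fix K :: int
      define k where "k = nat K + 2"
      have "int k * int n \<ge> int k * 1" using n by (intro mult_left_mono) auto
      moreover have "int k \<ge> K" unfolding k_def by simp
      ultimately have "snd (e - 1, e - 1 + int k * int n) - fst (e - 1, e - 1 + int k * int n) \<ge> K"
        unfolding fst_conv snd_conv by linarith
      moreover have "k \<ge> 2" unfolding k_def by simp
      ultimately show "\<exists>a\<in>Y. K \<le> snd a - fst a" using mem by blast
    qed
  next
    case False
    then have E: "\<forall>e. \<exists>x\<in>X. fst x < e \<and> e < snd x" by blast
    have F: "\<exists>y\<in>Y. \<exists>b\<in>arc_class n (desusp y). fst b < f \<and> f < snd b" for f
    proof (rule ccontr)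
      assume nf: "\<not> ?thesis"
      have "(f, f + 2 * int n) \<in> left_perp n Y"
        unfolding left_perp_def
      proof (intro CollectI conjI ballI)
        show "is_arc (f, f + 2 * int n)" using n unfolding is_arc_def by simp
      next
        fix y assume y: "y \<in> Y"
        show "\<not> hom_nz n (f, f + 2 * int n) y"
        proof
          assume "hom_nz n (f, f + 2 * int n) y"
          then obtain a' b' where a': "a' \<in> arc_class n (f, f + 2 * int n)"
            and b': "b' \<in> arc_class n (desusp y)" and cr: "crosses a' b'"
            unfolding hom_nz_def ext_nz_def by blast
          from a' obtain r where ar: "a' = (f + r * int n, f + 2 * int n + r * int n)"
            unfolding class_mem by auto
          from cross_in_b[OF cr] show False
          proof
            assume h: "fst b' < fst a' \<and> fst a' < snd b'"
            have "(fst b' + (- r) * int n, snd b' + (- r) * int n) \<in> arc_class n (desusp y)"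
              by (rule class_shift_mem[OF b'])
            moreover have "fst b' + (- r) * int n < f \<and> f < snd b' + (- r) * int n"
              using h ar by (simp add: algebra_simps)
            ultimately show False using nf y by fastforce
          next
            assume h: "fst b' < snd a' \<and> snd a' < snd b'"
            have "(fst b' + (- r - 2) * int n, snd b' + (- r - 2) * int n) \<in> arc_class n (desusp y)"
              by (rule class_shift_mem[OF b'])
            moreover have "fst b' + (- r - 2) * int n < f \<and> f < snd b' + (- r - 2) * int n"
              using h ar by (simp add: algebra_simps)
            ultimately show False using nf y by fastforce
          qed
        qed
      qed
      then have "(f, f + 2 * int n) \<in> X" using XY by simp
      then show False using short n by fastforce
    qed
    define L where "L = (\<lambda>a. snd a - fst a) ` X"
    have Lsub: "L \<subseteq> {0..int n}" unfolding L_def using short per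
      unfolding periodic_arcs_def is_arc_def by fastforce
    have Lfin: "finite L" using Lsub finite_subset by blast
    have Lne: "L \<noteq> {}" using E unfolding L_def by blast
    obtain x0 where x0: "x0 \<in> X" "snd x0 - fst x0 = Max L"
      using Max_in[OF Lfin Lne] unfolding L_def by auto
    obtain y b where y: "y \<in> Y" and b: "b \<in> arc_class n (desusp y)"
      and sb: "fst b < fst x0" "fst x0 < snd b" using F by blast
    have nh0: "\<not> hom_nz n x0 y" using y x0(1) unfolding Y_def right_perp_def by blast
    have "\<not> crosses x0 b" using nh0 class_self b unfolding hom_nz_def ext_nz_def by blast
    then have t: "snd b \<ge> snd x0" using sb unfolding crosses_def by auto
    obtain x2 where x2: "x2 \<in> X" "fst x2 < fst b" "fst b < snd x2" using E by blast
    have nh2: "\<not> hom_nz n x2 y" using y x2(1) unfolding Y_def right_perp_def by blast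
    have "\<not> crosses x2 b" using nh2 class_self b unfolding hom_nz_def ext_nz_def by blast
    then have "snd x2 \<ge> snd b" using x2 unfolding crosses_def by auto
    then have "snd x2 - fst x2 > snd x0 - fst x0" using t sb x2 by linarith
    moreover have "snd x2 - fst x2 \<le> Max L" using Lfin x2(1) unfolding L_def by (intro Max_ge) auto
    ultimately show ?thesis using x0(2) by linarith
  qed
qed

theorem mainTheorem4:
  fixes n :: nat and X :: "arc set"
  assumes "n \<ge> 1"
    and "periodic_arcs n X"
    and "X = left_perp n (right_perp n X)"
  shows "let P1 = (finite (indecs n X) \<and> (\<forall>a\<in>X. level a \<le> int n - 1)
                   \<and> infinite (indecs n (right_perp n X)));
             P2 = (infinite (indecs n X) \<and> finite (indecs n (right_perp n X))
                   \<and> (\<forall>a\<in>right_perp n X. level a \<le> int n - 1))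
         in (P1 \<or> P2) \<and> \<not> (P1 \<and> P2)"
proof -
  have arcX: "\<forall>a\<in>X. is_arc a" using assms(2) unfolding periodic_arcs_def by blast
  show ?thesis
  proof (cases "\<exists>a\<in>X. snd a - fst a > int n")
    case True
    then obtain a0 where "a0 \<in> X" "snd a0 - fst a0 > int n" by blast
    from caseA[OF assms this] show ?thesis unfolding Let_def by blast
  next
    case False
    then have sh: "\<forall>a\<in>X. snd a - fst a \<le> int n" by auto
    have "finite (indecs n X)" using finite_indecs[OF assms(1)] sh arcX by blast
    moreover have "\<forall>a\<in>X. level a \<le> int n - 1" using sh unfolding level_def by fastforce
    moreover have "infinite (indecs n (right_perp n X))" using caseB[OF assms sh] .
    ultimately show ?thesis unfolding Let_def by blast
  qed
qed

end
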